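(* Let $b_1,\dots,b_n$ be nonzero real numbers and consider the boundary conditions $$y_k(\ell)=c_ky_k(0),\qquad c_k\neq0,\quad k=1,\dots,n,$$ i.e. $Cy(0)+Dy(\ell)=0$ with $C=\operatorname{diag}(c_1,\dots,c_n)$ and $D=-I_n$. Then these boundary conditions are regular, and: (i) Let $\Lambda_0=\{\lambda_m^0\}_{m\in\mathbb Z}$ be the sequence of zeros of $\Delta_0$ (counting multiplicity), ordered so that $\operatorname{Re}\lambda_m^0\le\operatorname{Re}\lambda_{m+1}^0$. Then there is a sequence of integers $\{m_k\}_{k\in\mathbb Z}$ with $$m_k<m_{k+1}\le m_k+n,\qquad \operatorname{Re}\lambda^0_{m_k}-\operatorname{Re}\lambda^0_{m_k-1}\ge\varepsilon,\qquad k\in\mathbb Z,$$ where $\varepsilon=\frac{2\pi}{b_{\max}n}$, $b_{\max}=\max\{|b_1|,\dots,|b_n|\}$. (ii) If $b_j\ln|c_k|\neq b_k\ln|c_j|$ for all $j\ne k$, then the boundary conditions are strictly regular. (iii) The boundary conditions are strictly regular if and only if for all $j\ne k$: either $b_j\ln|c_k|\ne b_k\ln|c_j|$, or ($b_j/b_k\in\mathbb Q$ and $\frac{b_j\arg(c_k)-b_k\arg(c_j)}{2\pi\gcd(b_j,b_k)}\notin\mathbb Z$). (iv) Periodic boundary conditions ($c_1=\dots=c_n=1$) are never strictly regular. Antiperiodic boundary conditions ($c_1=\dots=c_n=-1$) are strictly regular if and only if there exist $b_0>0$, odd integers $M_1,\dots,M_n$ and distinct nonnegative integers $a_1,\dots,a_n$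 with $b_k=2^{a_k}M_kb_0$, $k=1,\dots,n$. In particular, if $b_k=2^k$ for $k=1,\dots,n$, antiperiodic boundary conditions are strictly regular.
   Context: Given nonzero reals $b_1,\dots,b_n$ and $C,D\in\mathbb C^{n\times n}$ with $\operatorname{rank}(C\ D)=n$, set $\Delta_0(\lambda)=\det\big(C+D\operatorname{diag}(e^{i\lambda b_1},\dots,e^{i\lambda b_n})\big)$. Let $P_+=\operatorname{diag}(p_1^+,\dots,p_n^+)$ with $p_k^+=1$ if $b_k>0$ and $0$ if $b_k<0$, and $P_-=I_n-P_+$. The boundary conditions $Cy(0)+Dy(\ell)=0$ are regular if $\det(CP_-+DP_+)\ne0$ and $\det(CP_++DP_-)\ne0$. A sequence $\{\mu_m\}_{m\in\mathbb Z}$ is asymptotically separated if for some $m_0$ and $\delta>0$, $|\mu_j-\mu_k|>2\delta$ whenever $j\ne k$, $|j|,|k|>m_0$. The boundary conditions are strictly regular if they are regular and the sequence of zeros of $\Delta_0$ (counting multiplicity) is asymptotically separated. For reals $x,y\ne0$ with $x/y\in\mathbb Q$, $\gcd(x,y)$ is the largest $b>0$ with $x/b,y/b\in\mathbb Z$. *)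

theory Defs
  imports "HOL-Complex_Analysis.Complex_Analysis"
begin

definition diag_mat :: "('n::finite \<Rightarrow> complex) \<Rightarrow> complex^'n^'n" where
  "diag_mat f = (\<chi> i j. if i = j then f i else 0)"

definition Delta0 :: "('n::finite \<Rightarrow> real) \<Rightarrow> complex^'n^'n \<Rightarrow> complex^'n^'n \<Rightarrow> complex \<Rightarrow> complex" where
  "Delta0 b C D z = det (C + D ** diag_mat (\<lambda>k. exp (\<i> * z * complex_of_real (b k))))"

definition P_plus :: "('n::finite \<Rightarrow> real) \<Rightarrow> complex^'n^'n" where
  "P_plus b = diag_mat (\<lambda>k. if b k > 0 then 1 else 0)"

definition P_minus :: "('n::finite \<Rightarrow> real) \<Rightarrow> complex^'n^'n" where
  "P_minus b = mat 1 - P_plus b"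

definition regular_bc :: "('n::finite \<Rightarrow> real) \<Rightarrow> complex^'n^'n \<Rightarrow> complex^'n^'n \<Rightarrow> bool" where
  "regular_bc b C D \<longleftrightarrow> det (C ** P_minus b + D ** P_plus b) \<noteq> 0 \<and> det (C ** P_plus b + D ** P_minus b) \<noteq> 0"

definition zero_seq :: "(complex \<Rightarrow> complex) \<Rightarrow> (int \<Rightarrow> complex) \<Rightarrow> bool" where
  "zero_seq f Lam \<longleftrightarrow> (\<forall>z. finite {m. Lam m = z} \<and>
      card {m. Lam m = z} = (if f z = 0 then nat (zorder f z) else 0))"

definition asymp_separated :: "(int \<Rightarrow> complex) \<Rightarrow> bool" where
  "asymp_separated mu \<longleftrightarrow> (\<exists>m0::int. \<exists>\<delta>::real. \<delta> > 0 \<and>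
      (\<forall>j k. j \<noteq> k \<and> \<bar>j\<bar> > m0 \<and> \<bar>k\<bar> > m0 \<longrightarrow> cmod (mu j - mu k) > 2 * \<delta>))"

definition strictly_regular_bc :: "('n::finite \<Rightarrow> real) \<Rightarrow> complex^'n^'n \<Rightarrow> complex^'n^'n \<Rightarrow> bool" where
  "strictly_regular_bc b C D \<longleftrightarrow> regular_bc b C D \<and>
      (\<exists>Lam. zero_seq (Delta0 b C D) Lam \<and> asymp_separated Lam)"

text \<open>gcd of two nonzero reals with rational ratio.\<close>
definition real_gcd :: "real \<Rightarrow> real \<Rightarrow> real" where
  "real_gcd x y = (GREATEST g. g > 0 \<and> x / g \<in> \<int> \<and> y / g \<in> \<int>)"

end

theory Submission
  imports Defs "HOL-Analysis.Kronecker_Approximation_Theorem"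
begin

definition zk :: "real \<Rightarrow> complex \<Rightarrow> int \<Rightarrow> complex" where
  "zk bb cc m = Complex ((Arg cc + 2*pi* of_int m)/bb) (- ln (cmod cc)/bb)"

lemma zk_char:
  assumes "bb \<noteq> 0" "cc \<noteq> 0"
  shows "exp (\<i> * z * complex_of_real bb) = cc \<longleftrightarrow> (\<exists>m. z = zk bb cc m)"
proof -
  have "exp (\<i> * z * bb) = cc \<longleftrightarrow> exp (\<i> * z * bb) = exp (Ln cc)" using assms by simp
  also have "\<dots> \<longleftrightarrow> (\<exists>n::int. \<i> * z * bb = Ln cc + (of_int (2 * n) * pi) * \<i>)"
    by (rule exp_eq)
  also have "\<dots> \<longleftrightarrow> (\<exists>m. z = zk bb cc m)"
  proof -
    have "\<i> * z * bb = Ln cc + (of_int (2 * n) * pi) * \<i> \<longleftrightarrow> z = zk bb cc n" for n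
    proof -
      have "\<i> * z * bb = Ln cc + (of_int (2 * n) * pi) * \<i> \<longleftrightarrow>
            z = (Ln cc + (of_int (2 * n) * pi) * \<i>) / (\<i> * bb)"
        using assms by (auto simp: field_simps)
      also have "(Ln cc + (of_int (2 * n) * pi) * \<i>) / (\<i> * bb) = zk bb cc n"
      proof -
        have "(\<i> * bb) * zk bb cc n = Ln cc + (of_int (2 * n) * pi) * \<i>"
          using assms by (simp add: Ln_Arg zk_def complex_eq_iff field_simps)
        then show ?thesis using assms by (simp add: field_simps)
      qed
      finally show ?thesis .
    qed
    then show ?thesis by auto
  qed
  finally show ?thesis by simp
qed

lemma zk_inj: assumes "bb \<noteq> 0" "zk bb cc m = zk bb cc p" shows "m = p"
  using assms by (auto simp: zk_def complex_eq_iff field_simps)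

lemma Re_zk: "Re (zk bb cc m) = (Arg cc + 2*pi* of_int m)/bb" by (simp add: zk_def)
lemma Im_zk: "Im (zk bb cc m) = - ln (cmod cc)/bb" by (simp add: zk_def)

lemma Delta0_eq:
  fixes b :: "'n::finite \<Rightarrow> real"
  shows "Delta0 b (diag_mat c) (- mat 1) z = (\<Prod>k\<in>UNIV. c k - exp (\<i> * z * complex_of_real (b k)))"
proof -
  let ?A = "diag_mat c + (- mat 1) ** diag_mat (\<lambda>k. exp (\<i> * z * complex_of_real (b k)))"
  have m: "(- mat 1 :: complex^'n^'n) ** B = - B" for B :: "complex^'n^'n"
  proof -
    have "(- A) ** B = - (A ** B)" for A :: "complex^'n^'n"
      by (simp add: matrix_matrix_mult_def vec_eq_iff sum_negf)
    then show ?thesis by simp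
  qed
  have e: "?A $ i $ j = (if i = j then c i - exp (\<i> * z * complex_of_real (b i)) else 0)" for i j
    by (simp add: m diag_mat_def)
  have "det ?A = (\<Prod>i\<in>UNIV. ?A$i$i)"
    by (rule det_diagonal) (simp only: e, simp)
  then show ?thesis unfolding Delta0_def by (simp only: e, simp)
qed


lemma diag_mat_mult: "diag_mat f ** diag_mat g = diag_mat (\<lambda>k. f k * g k)"
proof -
  have "(\<Sum>k\<in>UNIV. (if i = k then f i else 0) * (if k = j then g k else 0)) = (if i = j then f i * g i else 0)"
    for i j :: 'a
  proof -
    have "(\<Sum>k\<in>UNIV. (if i = k then f i else 0) * (if k = j then g k else 0)) = 
          (\<Sum>k\<in>UNIV. if k = i then (if i = j then f i * g i else 0) else 0)"
      by (rule sum.cong) auto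
    then show ?thesis by simp
  qed
  then show ?thesis by (simp add: diag_mat_def matrix_matrix_mult_def vec_eq_iff)
qed

lemma diag_mat_add: "diag_mat f + diag_mat g = diag_mat (\<lambda>k. f k + g k)"
  by (simp add: diag_mat_def vec_eq_iff)

lemma diag_mat_neg: "- diag_mat f = diag_mat (\<lambda>k. - f k)"
  by (simp add: diag_mat_def vec_eq_iff)

lemma diag_mat_one: "(mat 1 :: complex^'n::finite^'n) = diag_mat (\<lambda>k. 1)"
  by (simp add: diag_mat_def vec_eq_iff mat_def)

lemma diag_mat_diff: "diag_mat f - diag_mat g = diag_mat (\<lambda>k. f k - g k)"
  by (simp add: diag_mat_def vec_eq_iff)

lemma det_diag_mat: "det (diag_mat f) = (\<Prod>k\<in>UNIV. f k)"
  by (subst det_diagonal) (auto simp: diag_mat_def)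

lemma regular_diag:
  fixes b :: "'n::finite \<Rightarrow> real"
  assumes "\<And>k. c k \<noteq> 0"
  shows "regular_bc b (diag_mat c) (- mat 1)"
  using assms
  by (auto simp: regular_bc_def P_minus_def P_plus_def diag_mat_one diag_mat_mult diag_mat_add
      diag_mat_neg diag_mat_diff det_diag_mat if_distrib cong: if_cong)

lemma factor_eventually_nz:
  assumes "bb \<noteq> 0"
  shows "eventually (\<lambda>w. cc - exp (\<i> * w * complex_of_real bb) \<noteq> 0) (at z)"
proof (cases "cc - exp (\<i> * z * complex_of_real bb) = 0")
  case False
  have "(\<lambda>w. cc - exp (\<i> * w * complex_of_real bb)) analytic_on {z}"
    by (intro analytic_intros)
  from analytic_at_neq_imp_eventually_neq[OF this False] show ?thesis .
next
  case True
  have d: "2*pi/\<bar>bb\<bar> > 0" using assms by simp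
  show ?thesis unfolding eventually_at
  proof (intro exI[of _ "2*pi/\<bar>bb\<bar>"] conjI ballI impI d)
    fix w assume w: "w \<noteq> z \<and> dist w z < 2*pi/\<bar>bb\<bar>"
    show "cc - exp (\<i> * w * complex_of_real bb) \<noteq> 0"
    proof
      assume "cc - exp (\<i> * w * complex_of_real bb) = 0"
      with True have "exp (\<i> * w * complex_of_real bb) = exp (\<i> * z * complex_of_real bb)" by simp
      then obtain n :: int where n: "\<i> * w * complex_of_real bb = \<i> * z * complex_of_real bb + (of_int (2 * n) * pi) * \<i>"
        by (auto simp: exp_eq)
      then have "w - z = of_real (2 * pi * n / bb)"
        using assms by (auto simp: field_simps complex_eq_iff)
      moreover have "n \<noteq> 0" using n w assms by auto
      ultimately have "dist w z = 2*pi*\<bar>n\<bar>/\<bar>bb\<bar>"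
        by (simp add: dist_norm norm_mult norm_divide)
      moreover have "2*pi/\<bar>bb\<bar> \<le> 2*pi*\<bar>n\<bar>/\<bar>bb\<bar>"
        using \<open>n \<noteq> 0\<close> assms by (auto simp: divide_right_mono)
      ultimately show False using w by simp
    qed
  qed
qed

lemma factor_zorder:
  assumes "bb \<noteq> 0" "cc - exp (\<i> * z * complex_of_real bb) = 0"
  shows "zorder (\<lambda>w. cc - exp (\<i> * w * complex_of_real bb)) z = 1"
proof (rule zorder_zero_eqI')
  show "(\<lambda>w. cc - exp (\<i> * w * complex_of_real bb)) analytic_on {z}"
    by (intro analytic_intros)
  show "(deriv ^^ i) (\<lambda>w. cc - exp (\<i> * w * complex_of_real bb)) z = 0" if "i < nat 1" for i
    using that assms by simp
  have "((\<lambda>w. cc - exp (\<i> * w * complex_of_real bb)) has_field_derivative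
        - (exp (\<i> * z * complex_of_real bb) * (\<i> * complex_of_real bb))) (at z)"
    by (auto intro!: derivative_eq_intros)
  then have "deriv (\<lambda>w. cc - exp (\<i> * w * complex_of_real bb)) z = 
        - (exp (\<i> * z * complex_of_real bb) * (\<i> * complex_of_real bb))"
    by (rule DERIV_imp_deriv)
  then show "(deriv ^^ nat 1) (\<lambda>w. cc - exp (\<i> * w * complex_of_real bb)) z \<noteq> 0"
    using assms by simp
qed simp

lemma Delta_zorder:
  fixes b :: "'n::finite \<Rightarrow> real"
  assumes "\<And>k. b k \<noteq> 0"
  shows "zorder (\<lambda>w. \<Prod>k\<in>UNIV. c k - exp (\<i> * w * complex_of_real (b k))) z
         = int (card {k. exp (\<i> * z * complex_of_real (b k)) = c k})"
proof -
  have "zorder (\<lambda>w. \<Prod>k\<in>UNIV. c k - exp (\<i> * w * complex_of_real (b k))) z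
     = (\<Sum>k\<in>UNIV. zorder (\<lambda>w. c k - exp (\<i> * w * complex_of_real (b k))) z)"
  proof (rule zorder_prod_analytic)
    show "(\<lambda>w. c k - exp (\<i> * w * complex_of_real (b k))) analytic_on {z}" for k
      by (intro analytic_intros)
    have "\<forall>\<^sub>F w in at z. \<forall>k. c k - exp (\<i> * w * complex_of_real (b k)) \<noteq> 0"
      by (rule eventually_all_finite) (use factor_eventually_nz assms in blast)
    then show "\<forall>\<^sub>F w in at z. (\<Prod>k\<in>UNIV. c k - exp (\<i> * w * complex_of_real (b k))) \<noteq> 0"
      by eventually_elim simp
  qed
  also have "\<dots> = (\<Sum>k\<in>UNIV. if exp (\<i> * z * complex_of_real (b k)) = c k then 1 else 0)"
  proof (rule sum.cong)
    fix k :: 'n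
    show "zorder (\<lambda>w. c k - exp (\<i> * w * complex_of_real (b k))) z = 
      (if exp (\<i> * z * complex_of_real (b k)) = c k then 1 else 0)"
    proof (cases "exp (\<i> * z * complex_of_real (b k)) = c k")
      case True then show ?thesis using factor_zorder[of "b k" "c k" z] assms by simp
    next
      case False then show ?thesis
        by (simp, intro zorder_eq_0I analytic_intros) simp
    qed
  qed simp
  also have "\<dots> = int (card {k. exp (\<i> * z * complex_of_real (b k)) = c k})"
    by (simp add: sum.If_cases)
  finally show ?thesis .
qed

lemma real_gcd_props:
  fixes x y :: real
  assumes "x \<noteq> 0" "y \<noteq> 0" "x / y \<in> \<rat>"
  shows "real_gcd x y > 0 \<and> (\<exists>P Q :: int. x = P * real_gcd x y \<and> y = Q * real_gcd x y \<and> coprime P Q)"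
proof -
  obtain a b' :: int where ab: "x / y = of_int a / of_int b'" "b' > 0" "coprime a b'"
    using assms(3) by (meson Rats_cases')
  define s :: int where "s = (if y > 0 then 1 else -1)"
  have s2: "s * s = 1" by (simp add: s_def)
  have ys: "\<bar>y\<bar> = of_int s * y" using assms(2) by (auto simp: s_def)
  define g0 where "g0 = \<bar>y\<bar> / of_int b'"
  have g0pos: "g0 > 0" using assms(2) ab(2) by (simp add: g0_def)
  have xa: "x = of_int (s * a) * g0"
  proof -
    have "x = y * (of_int a / of_int b')" using ab(1) assms(2) by (simp add: field_simps)
    also have "\<dots> = of_int (s * s) * y * (of_int a / of_int b')" using s2 by simp
    also have "\<dots> = of_int (s * a) * g0" unfolding g0_def ys by (simp add: field_simps)
    finally show ?thesis .
  qed
  have yb: "y = of_int (s * b') * g0"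
  proof -
    have "y = of_int (s * s) * y" using s2 by simp
    also have "\<dots> = of_int (s * b') * g0" unfolding g0_def ys using ab(2) by (simp add: field_simps)
    finally show ?thesis .
  qed
  have G: "real_gcd x y = g0"
    unfolding real_gcd_def
  proof (rule Greatest_equality)
    show "g0 > 0 \<and> x / g0 \<in> \<int> \<and> y / g0 \<in> \<int>"
      using g0pos by (subst xa, subst yb, simp)
  next
    fix g assume g: "g > 0 \<and> x / g \<in> \<int> \<and> y / g \<in> \<int>"
    then obtain u v :: int where uv: "x / g = of_int u" "y / g = of_int v"
      by (meson Ints_cases)
    have v0: "v \<noteq> 0" using uv(2) g assms(2) by auto
    have "of_int a / of_int b' = (of_int u / of_int v :: real)"
    proof -
      have "x / y = (x / g) / (y / g)" using g by simp
      then show ?thesis using ab(1) uv by simp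
    qed
    then have "a * v = u * b'" using v0 ab(2)
      by (simp add: field_simps flip: of_int_mult) 
    then have "b' dvd a * v" by (metis dvd_triv_right)
    then have "b' dvd v" using ab(3) by (metis coprime_commute coprime_dvd_mult_right_iff)
    then have "b' dvd \<bar>v\<bar>" by simp
    then have "b' \<le> \<bar>v\<bar>" using v0 by (intro zdvd_imp_le) auto
    then have "real_of_int b' \<le> \<bar>of_int v\<bar>" by linarith
    moreover have "g = \<bar>y\<bar> / \<bar>of_int v\<bar>" using uv(2) g v0 by (auto simp: field_simps abs_mult)
    ultimately show "g \<le> g0" unfolding g0_def using ab(2) assms(2)
      by (simp add: frac_le)
  qed
  have "coprime (s * a) (s * b')" using ab(3)
    by (cases "y > 0") (simp_all add: s_def)
  then show ?thesis using G g0pos xa yb by blast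
qed

definition Sep2 :: "real \<Rightarrow> complex \<Rightarrow> real \<Rightarrow> complex \<Rightarrow> bool" where
  "Sep2 b1 c1 b2 c2 \<longleftrightarrow> (\<exists>\<delta>>0. \<exists>N::nat. \<forall>m p. \<bar>m\<bar> > int N \<and> \<bar>p\<bar> > int N \<longrightarrow>
      cmod (zk b1 c1 m - zk b2 c2 p) > 2 * \<delta>)"

lemma Re_zk_diff:
  assumes "b1 \<noteq> 0" "b2 \<noteq> 0"
  shows "Re (zk b1 c1 m - zk b2 c2 p) =
    (2*pi*(of_int m * b2 - of_int p * b1) - (b1 * Arg c2 - b2 * Arg c1)) / (b1 * b2)"
  using assms by (simp add: zk_def field_simps)

lemma Im_zk_diff:
  assumes "b1 \<noteq> 0" "b2 \<noteq> 0"
  shows "Im (zk b1 c1 m - zk b2 c2 p) = (b1 * ln (cmod c2) - b2 * ln (cmod c1)) / (b1 * b2)"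
  using assms by (simp add: zk_def field_simps)

lemma sep_im:
  assumes "b1 \<noteq> 0" "b2 \<noteq> 0" "b1 * ln (cmod c2) \<noteq> b2 * ln (cmod c1)"
  shows "Sep2 b1 c1 b2 c2"
proof -
  define D where "D = (b1 * ln (cmod c2) - b2 * ln (cmod c1)) / (b1 * b2)"
  have D: "\<bar>D\<bar> > 0" using assms by (simp add: D_def)
  show ?thesis unfolding Sep2_def
  proof (intro exI[of _ "\<bar>D\<bar>/4"] conjI exI[of _ 0] allI impI)
    show "\<bar>D\<bar>/4 > 0" using D by simp
    fix m p
    have "\<bar>D\<bar> \<le> cmod (zk b1 c1 m - zk b2 c2 p)"
      using abs_Im_le_cmod[of "zk b1 c1 m - zk b2 c2 p"] Im_zk_diff[OF assms(1,2)] D_def by simp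
    then show "cmod (zk b1 c1 m - zk b2 c2 p) > 2 * (\<bar>D\<bar>/4)" using D by simp
  qed
qed

lemma sep_rat:
  assumes "b1 \<noteq> 0" "b2 \<noteq> 0" "b1 / b2 \<in> \<rat>"
    and nint: "(b1 * Arg c2 - b2 * Arg c1) / (2 * pi * real_gcd b1 b2) \<notin> \<int>"
  shows "Sep2 b1 c1 b2 c2"
proof -
  define g where "g = real_gcd b1 b2"
  obtain P Q :: int where g: "g > 0" "b1 = P * g" "b2 = Q * g"
    using real_gcd_props[OF assms(1-3)] unfolding g_def by blast
  define t where "t = (b1 * Arg c2 - b2 * Arg c1) / (2 * pi * g)"
  have tn: "t \<notin> \<int>" using nint by (simp add: t_def g_def)
  have fl: "of_int \<lfloor>t\<rfloor> < t"
  proof -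
    have "of_int \<lfloor>t\<rfloor> \<noteq> t" using tn by (metis Ints_of_int)
    then show ?thesis using of_int_floor_le[of t] by linarith
  qed
  define e where "e = min (t - of_int \<lfloor>t\<rfloor>) (of_int \<lfloor>t\<rfloor> + 1 - t)"
  have e: "e > 0" using fl by (simp add: e_def)
  have es: "\<bar>of_int s - t\<bar> \<ge> e" for s :: int
  proof (cases "s \<le> \<lfloor>t\<rfloor>")
    case True then have "real_of_int s \<le> of_int \<lfloor>t\<rfloor>" by linarith
    then show ?thesis unfolding e_def by linarith
  next
    case False then have "real_of_int s \<ge> of_int \<lfloor>t\<rfloor> + 1" by linarith
    then show ?thesis unfolding e_def by linarith
  qed
  define B where "B = \<bar>b1 * b2\<bar>"
  have B: "B > 0" using assms by (simp add: B_def)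
  show ?thesis unfolding Sep2_def
  proof (intro exI[of _ "pi * g * e / (2 * B)"] conjI exI[of _ 0] allI impI)
    show "pi * g * e / (2 * B) > 0" using g e B by simp
    fix m p :: int
    define s where "s = m * Q - p * P"
    have "Re (zk b1 c1 m - zk b2 c2 p) = (2*pi*g*(of_int s - t)) / (b1 * b2)"
    proof -
      have th: "b1 * Arg c2 - b2 * Arg c1 = 2*pi*g*t" using g(1) pi_gt_zero by (simp add: t_def)
      have ms: "of_int m * b2 - of_int p * b1 = g * of_int s" using g(2,3) by (simp add: s_def algebra_simps)
      show ?thesis unfolding Re_zk_diff[OF assms(1,2)] th ms by (simp add: algebra_simps)
    qed
    then have "\<bar>Re (zk b1 c1 m - zk b2 c2 p)\<bar> = 2*pi*g*\<bar>of_int s - t\<bar> / B"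
      using g by (simp add: B_def abs_mult abs_divide)
    also have "\<dots> \<ge> 2*pi*g*e / B"
      using es[of s] g B by (simp add: divide_right_mono)
    finally have "cmod (zk b1 c1 m - zk b2 c2 p) \<ge> 2*pi*g*e / B"
      using abs_Re_le_cmod order_trans by blast
    moreover have "2*pi*g*e / B > 2 * (pi * g * e / (2 * B))"
      using g e B pi_gt_zero
      by (simp add: field_simps)
    ultimately show "cmod (zk b1 c1 m - zk b2 c2 p) > 2 * (pi * g * e / (2 * B))" by linarith
  qed
qed


lemma not_Sep2I:
  assumes "\<And>\<delta> N. \<delta> > 0 \<Longrightarrow> \<exists>m p. \<bar>m\<bar> > int N \<and> \<bar>p\<bar> > int N \<and> cmod (zk b1 c1 m - zk b2 c2 p) \<le> 2 * \<delta>"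
  shows "\<not> Sep2 b1 c1 b2 c2"
  unfolding Sep2_def using assms by (meson not_less)

lemma nsep_int:
  assumes "b1 \<noteq> 0" "b2 \<noteq> 0" "b1 / b2 \<in> \<rat>"
    and D: "b1 * ln (cmod c2) = b2 * ln (cmod c1)"
    and tint: "(b1 * Arg c2 - b2 * Arg c1) / (2 * pi * real_gcd b1 b2) \<in> \<int>"
  shows "\<not> Sep2 b1 c1 b2 c2"
proof (rule not_Sep2I)
  fix \<delta> :: real and N :: nat assume "\<delta> > 0"
  define g where "g = real_gcd b1 b2"
  obtain P Q :: int where g: "g > 0" "b1 = P * g" "b2 = Q * g" and cop: "coprime P Q"
    using real_gcd_props[OF assms(1-3)] unfolding g_def by blast
  have P0: "P \<noteq> 0" and Q0: "Q \<noteq> 0" using g assms(1,2) by auto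
  define t where "t = (b1 * Arg c2 - b2 * Arg c1) / (2 * pi * g)"
  obtain T :: int where T: "t = of_int T" using tint unfolding t_def g_def by (meson Ints_cases)
  obtain u v :: int where uv: "u * Q + v * P = gcd Q P" using bezout_int by blast
  have "gcd Q P = 1" using cop by (simp add: coprime_commute coprime_iff_gcd_eq_1)
  with uv have uv1: "u * Q + v * P = 1" by simp
  define r :: int where "r = int N + \<bar>T * u\<bar> + \<bar>T * v\<bar> + 1"
  define m where "m = T * u + r * P"
  define p where "p = - T * v + r * Q"
  have "\<bar>r * P\<bar> \<ge> r" using P0 by (simp add: abs_mult r_def)
  then have mN: "\<bar>m\<bar> > int N" unfolding m_def r_def by linarith
  have "\<bar>r * Q\<bar> \<ge> r" using Q0 by (simp add: abs_mult r_def)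
  then have pN: "\<bar>p\<bar> > int N" unfolding p_def r_def by linarith
  have s: "m * Q - p * P = T"
  proof -
    have "m * Q - p * P = T * (u * Q + v * P)" unfolding m_def p_def by (simp add: algebra_simps)
    then show ?thesis using uv1 by simp
  qed
  have th: "b1 * Arg c2 - b2 * Arg c1 = 2*pi*g*T" using g(1) pi_gt_zero T by (simp add: t_def field_simps)
  have ms: "of_int m * b2 - of_int p * b1 = g * of_int T"
  proof -
    have "of_int m * b2 - of_int p * b1 = g * of_int (m * Q - p * P)" using g(2,3) by (simp add: algebra_simps)
    then show ?thesis using s by simp
  qed
  have "Re (zk b1 c1 m - zk b2 c2 p) = 0"
    unfolding Re_zk_diff[OF assms(1,2)] th ms by (simp add: algebra_simps)
  moreover have "Im (zk b1 c1 m - zk b2 c2 p) = 0"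
    unfolding Im_zk_diff[OF assms(1,2)] D by simp
  ultimately have "cmod (zk b1 c1 m - zk b2 c2 p) = 0" by (simp add: cmod_eq_Re)
  then show "\<exists>m p. \<bar>m\<bar> > int N \<and> \<bar>p\<bar> > int N \<and> cmod (zk b1 c1 m - zk b2 c2 p) \<le> 2 * \<delta>"
    using mN pN \<open>\<delta> > 0\<close> by (intro exI[of _ m] exI[of _ p]) simp
qed

lemma nsep_irr:
  assumes b1: "b1 \<noteq> 0" and b2: "b2 \<noteq> 0" and irr: "b1 / b2 \<notin> \<rat>"
    and D: "b1 * ln (cmod c2) = b2 * ln (cmod c1)"
  shows "\<not> Sep2 b1 c1 b2 c2"
proof (rule not_Sep2I)
  fix \<delta> :: real and N :: nat assume d: "\<delta> > 0"
  define r where "r = b2 / b1"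
  have rirr: "r \<notin> \<rat>"
  proof
    assume "r \<in> \<rat>"
    then have "inverse r \<in> \<rat>" by simp
    then show False using irr by (simp add: r_def)
  qed
  have r0: "r \<noteq> 0" using rirr by auto
  define \<theta> where "\<theta> = b1 * Arg c2 - b2 * Arg c1"
  define \<alpha>0 where "\<alpha>0 = \<theta> / (2 * pi * b1)"
  define \<epsilon> where "\<epsilon> = \<delta> * \<bar>b2\<bar> / pi"
  have eps: "\<epsilon> > 0" using d b2 by (simp add: \<epsilon>_def)
  define K :: nat where "K = nat \<lceil>(real N + \<bar>\<alpha>0\<bar> + \<epsilon>) / \<bar>r\<bar>\<rceil> + N"
  obtain h k :: int where hk: "k > 0" "\<bar>of_int k * r - of_int h - (\<alpha>0 - of_int K * r)\<bar> < \<epsilon>"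
    using sequence_of_fractional_parts_is_dense[OF rirr eps] by blast
  define m where "m = k + int K"
  define p where "p = h"
  have close: "\<bar>of_int m * r - of_int p - \<alpha>0\<bar> < \<epsilon>"
    using hk(2) unfolding m_def p_def by (simp add: algebra_simps)
  have mK: "m > int K" using hk(1) by (simp add: m_def)
  moreover have "int K \<ge> int N" by (simp add: K_def)
  ultimately have mN: "\<bar>m\<bar> > int N" by linarith
  have "real_of_int m > (real N + \<bar>\<alpha>0\<bar> + \<epsilon>) / \<bar>r\<bar>"
  proof -
    have "(real N + \<bar>\<alpha>0\<bar> + \<epsilon>) / \<bar>r\<bar> \<le> real K"
      unfolding K_def by (simp add: nat_add_distrib) linarith
    also have "real K < real_of_int m" using mK by simp
    finally show ?thesis .
  qed
  then have "real_of_int m * \<bar>r\<bar> > real N + \<bar>\<alpha>0\<bar> + \<epsilon>" using r0 by (simp add: field_simps)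
  then have "\<bar>of_int m * r\<bar> > real N + \<bar>\<alpha>0\<bar> + \<epsilon>" using mK by (simp add: abs_mult)
  then have "\<bar>real_of_int p\<bar> > real N" using close by linarith
  then have pN: "\<bar>p\<bar> > int N" by linarith
  have re: "Re (zk b1 c1 m - zk b2 c2 p) = 2 * pi * (of_int m * r - of_int p - \<alpha>0) / b2"
    unfolding Re_zk_diff[OF b1 b2] using b1 b2 by (simp add: r_def \<alpha>0_def \<theta>_def field_simps)
  have im: "Im (zk b1 c1 m - zk b2 c2 p) = 0"
    unfolding Im_zk_diff[OF b1 b2] D by simp
  have "cmod (zk b1 c1 m - zk b2 c2 p) = 2 * pi * \<bar>of_int m * r - of_int p - \<alpha>0\<bar> / \<bar>b2\<bar>"
    using im re by (simp add: cmod_eq_Re abs_mult abs_divide)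
  also have "\<dots> \<le> 2 * pi * \<epsilon> / \<bar>b2\<bar>"
    using close b2 by (intro divide_right_mono mult_left_mono) auto
  also have "\<dots> = 2 * \<delta>" using b2 by (simp add: \<epsilon>_def)
  finally show "\<exists>m p. \<bar>m\<bar> > int N \<and> \<bar>p\<bar> > int N \<and> cmod (zk b1 c1 m - zk b2 c2 p) \<le> 2 * \<delta>"
    using mN pN by blast
qed

lemma Sep2_iff:
  assumes "b1 \<noteq> 0" "b2 \<noteq> 0"
  shows "Sep2 b1 c1 b2 c2 \<longleftrightarrow> (b1 * ln (cmod c2) \<noteq> b2 * ln (cmod c1) \<or>
     (b1 / b2 \<in> \<rat> \<and> (b1 * Arg c2 - b2 * Arg c1) / (2 * pi * real_gcd b1 b2) \<notin> \<int>))"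
  using sep_im[OF assms] sep_rat[OF assms] nsep_int[OF assms] nsep_irr[OF assms] by blast

definition Kz :: "('n::finite \<Rightarrow> real) \<Rightarrow> ('n \<Rightarrow> complex) \<Rightarrow> complex \<Rightarrow> 'n set" where
  "Kz b c z = {k. \<exists>m. z = zk (b k) (c k) m}"

definition FP :: "('n::finite \<Rightarrow> real) \<Rightarrow> ('n \<Rightarrow> complex) \<Rightarrow> (int \<Rightarrow> complex) \<Rightarrow> bool" where
  "FP b c Lam \<longleftrightarrow> (\<forall>z. finite {m. Lam m = z} \<and> card {m. Lam m = z} = card (Kz b c z))"

lemma zero_seq_iff:
  fixes b :: "'n::finite \<Rightarrow> real"
  assumes b_nz: "\<And>k. b k \<noteq> 0" and c_nz: "\<And>k. c k \<noteq> 0"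
  shows "zero_seq (Delta0 b (diag_mat c) (- mat 1)) Lam \<longleftrightarrow> FP b c Lam"
proof -
  have K: "{k. exp (\<i> * z * complex_of_real (b k)) = c k} = Kz b c z" for z
    using zk_char[OF b_nz c_nz] by (auto simp: Kz_def)
  have F: "Delta0 b (diag_mat c) (- mat 1) = (\<lambda>w. \<Prod>k\<in>UNIV. c k - exp (\<i> * w * complex_of_real (b k)))"
    by (rule ext) (rule Delta0_eq)
  have Z: "Delta0 b (diag_mat c) (- mat 1) z = 0 \<longleftrightarrow> Kz b c z \<noteq> {}" for z
  proof -
    have "Delta0 b (diag_mat c) (- mat 1) z = 0 \<longleftrightarrow> (\<exists>k. c k - exp (\<i> * z * complex_of_real (b k)) = 0)"
      unfolding F by simp
    also have "\<dots> \<longleftrightarrow> (\<exists>k. exp (\<i> * z * complex_of_real (b k)) = c k)" by (rule ex_cong1) auto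
    also have "\<dots> \<longleftrightarrow> Kz b c z \<noteq> {}" unfolding K[symmetric] by blast
    finally show ?thesis .
  qed
  have O: "zorder (Delta0 b (diag_mat c) (- mat 1)) z = int (card (Kz b c z))" for z
    unfolding F K[symmetric] by (rule Delta_zorder[OF b_nz])
  have E: "(if Delta0 b (diag_mat c) (- mat 1) z = 0 then nat (zorder (Delta0 b (diag_mat c) (- mat 1)) z) else 0)
     = card (Kz b c z)" for z
    by (cases "Kz b c z = {}") (simp_all add: Z O)
  show ?thesis unfolding zero_seq_def FP_def E ..
qed

lemma Kz_mem: "k \<in> Kz b c (zk (b k) (c k) m)" by (auto simp: Kz_def)

lemma exists_FP:
  fixes b :: "'n::finite \<Rightarrow> real"
  assumes b_nz: "\<And>k. b k \<noteq> 0"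
  shows "\<exists>Lam. FP b c Lam"
proof -
  obtain e :: "int \<Rightarrow> nat" where e: "bij_betw e UNIV UNIV"
    using countableE_infinite[of "UNIV :: int set"] by (auto simp: infinite_UNIV_int)
  have "infinite (UNIV :: ('n \<times> int) set)"
    by (simp add: finite_prod infinite_UNIV_int)
  then obtain g :: "nat \<Rightarrow> 'n \<times> int" where g: "bij_betw g UNIV UNIV"
    using countable_infiniteE'[of "UNIV :: ('n \<times> int) set"] by auto
  define \<phi> where "\<phi> = g \<circ> e"
  have phi: "bij \<phi>" unfolding \<phi>_def using e g by (rule bij_betw_trans)
  define Lam where "Lam = (\<lambda>i. zk (b (fst (\<phi> i))) (c (fst (\<phi> i))) (snd (\<phi> i)))"
  have "FP b c Lam" unfolding FP_def
  proof
    fix z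
    define S where "S = {km :: 'n \<times> int. zk (b (fst km)) (c (fst km)) (snd km) = z}"
    have fib: "{m. Lam m = z} = \<phi> -` S" by (auto simp: Lam_def S_def)
    have injS: "inj_on fst S"
      by (auto simp: inj_on_def S_def dest: zk_inj[OF b_nz])
    have imS: "fst ` S = Kz b c z"
    proof
      show "fst ` S \<subseteq> Kz b c z" by (auto simp: S_def Kz_def)
      show "Kz b c z \<subseteq> fst ` S"
      proof
        fix k assume "k \<in> Kz b c z"
        then obtain m where "z = zk (b k) (c k) m" by (auto simp: Kz_def)
        then have "(k, m) \<in> S" by (simp add: S_def)
        then show "k \<in> fst ` S" by force
      qed
    qed
    have finS: "finite S" using injS imS by (metis finite finite_imageD)
    have cS: "card S = card (Kz b c z)" using card_image[OF injS] imS by simp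
    have bS: "bij_betw \<phi> (\<phi> -` S) S"
      using phi by (auto simp: bij_betw_def bij_def inj_on_def surj_def intro: inj_on_subset) (metis UNIV_I bij_def phi surj_f_inv_f vimageI imageI)
    show "finite {m. Lam m = z} \<and> card {m. Lam m = z} = card (Kz b c z)"
      unfolding fib using bij_betw_finite[OF bS] bij_betw_same_card[OF bS] finS cS by simp
  qed
  then show ?thesis by blast
qed

definition sepQ :: "('n::finite \<Rightarrow> real) \<Rightarrow> ('n \<Rightarrow> complex) \<Rightarrow> bool" where
  "sepQ b c \<longleftrightarrow> (\<exists>\<delta>>0. \<exists>N::nat. \<forall>j k m p. (j, m) \<noteq> (k, p) \<and> \<bar>m\<bar> > int N \<and> \<bar>p\<bar> > int N \<longrightarrow>
      cmod (zk (b j) (c j) m - zk (b k) (c k) p) > 2 * \<delta>)"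

lemma finite_bound_int:
  fixes f :: "'a \<Rightarrow> int"
  assumes "finite A"
  shows "\<exists>N::nat. \<forall>x\<in>A. \<bar>f x\<bar> \<le> int N"
proof -
  define M where "M = Max (insert 0 ((\<lambda>x. \<bar>f x\<bar>) ` A))"
  have "\<forall>x\<in>A. \<bar>f x\<bar> \<le> M" using assms by (auto simp: M_def)
  moreover have "M \<ge> 0" using assms by (auto simp: M_def)
  ultimately show ?thesis by (intro exI[of _ "nat M"]) auto
qed

lemma two_elems:
  assumes "finite A" "card A \<ge> 2"
  shows "\<exists>x y. x \<in> A \<and> y \<in> A \<and> x \<noteq> y"
proof (rule ccontr)
  assume "\<not> ?thesis"
  then have "card A \<le> Suc 0" using assms(1) by (subst card_le_Suc0_iff_eq) auto
  with assms(2) show False by simp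
qed

lemma S_finite_card:
  fixes b :: "'n::finite \<Rightarrow> real"
  assumes b_nz: "\<And>k. b k \<noteq> 0"
  shows "finite {km :: 'n \<times> int. zk (b (fst km)) (c (fst km)) (snd km) = z}"
proof -
  define S where "S = {km :: 'n \<times> int. zk (b (fst km)) (c (fst km)) (snd km) = z}"
  have injS: "inj_on fst S"
    by (auto simp: inj_on_def S_def dest: zk_inj[OF b_nz])
  have "finite (fst ` S)" by simp
  then show ?thesis using injS finite_imageD unfolding S_def by blast
qed

lemma asep_iff:
  fixes b :: "'n::finite \<Rightarrow> real"
  assumes b_nz: "\<And>k. b k \<noteq> 0" and fp: "FP b c Lam"
  shows "asymp_separated Lam \<longleftrightarrow> sepQ b c"
proof
  have fin: "finite {i. Lam i = z}" and cd: "card {i. Lam i = z} = card (Kz b c z)" for z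
    using fp by (auto simp: FP_def)
  assume "asymp_separated Lam"
  then obtain m0 :: int and \<delta> where d: "\<delta> > 0"
    and H: "\<And>j k. j \<noteq> k \<Longrightarrow> \<bar>j\<bar> > m0 \<Longrightarrow> \<bar>k\<bar> > m0 \<Longrightarrow> cmod (Lam j - Lam k) > 2 * \<delta>"
    unfolding asymp_separated_def by blast
  define F where "F = Lam ` {i. \<bar>i\<bar> \<le> m0}"
  have "{i::int. \<bar>i\<bar> \<le> m0} = {-m0..m0}" by auto
  then have finF: "finite F" unfolding F_def by simp
  define PS where "PS = (\<Union>z\<in>F. {km :: 'n \<times> int. zk (b (fst km)) (c (fst km)) (snd km) = z})"
  have "finite PS" unfolding PS_def by (intro finite_UN_I finF S_finite_card b_nz)
  then obtain N :: nat where N: "\<And>km. km \<in> PS \<Longrightarrow> \<bar>snd km\<bar> \<le> int N"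
    using finite_bound_int[of PS snd] by blast
  have notF: "zk (b j) (c j) m \<notin> F" if "\<bar>m\<bar> > int N" for j m
  proof
    assume "zk (b j) (c j) m \<in> F"
    then have "(j, m) \<in> PS" unfolding PS_def by auto
    then show False using N[of "(j,m)"] that by simp
  qed
  have outside: "\<bar>i\<bar> > m0" if "Lam i \<notin> F" for i
    using that unfolding F_def by force
  have ex_i: "\<exists>i. Lam i = zk (b j) (c j) m" for j m
  proof -
    have "card (Kz b c (zk (b j) (c j) m)) \<ge> 1"
      using Kz_mem[of j b c m] by (metis One_nat_def Suc_leI card_gt_0_iff empty_iff finite)
    then have "card {i. Lam i = zk (b j) (c j) m} \<noteq> 0" using cd[of "zk (b j) (c j) m"] by linarith
    then have "{i. Lam i = zk (b j) (c j) m} \<noteq> {}" by (metis card.empty)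
    then show ?thesis by auto
  qed
  show "sepQ b c" unfolding sepQ_def
  proof (intro exI[of _ \<delta>] conjI d exI[of _ N] allI impI)
    fix j k :: 'n and m p :: int assume a: "(j, m) \<noteq> (k, p) \<and> int N < \<bar>m\<bar> \<and> int N < \<bar>p\<bar>"
    define z where "z = zk (b j) (c j) m"
    define w where "w = zk (b k) (c k) p"
    have zF: "z \<notin> F" and wF: "w \<notin> F" using notF a by (auto simp: z_def w_def)
    show "cmod (zk (b j) (c j) m - zk (b k) (c k) p) > 2 * \<delta>"
    proof (cases "z = w")
      case False
      obtain i where i: "Lam i = z" using ex_i z_def by blast
      obtain i' where i': "Lam i' = w" using ex_i w_def by blast
      have "i \<noteq> i'" using i i' False by auto
      then show ?thesis using H[of i i'] outside[of i] outside[of i'] i i' zF wF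
        by (simp add: z_def w_def)
    next
      case True
      have jk: "j \<noteq> k"
      proof
        assume "j = k"
        then have "m = p" using True zk_inj[OF b_nz] by (simp add: z_def w_def)
        then show False using a \<open>j = k\<close> by simp
      qed
      have "{j, k} \<subseteq> Kz b c z" using True Kz_mem[of j b c m] Kz_mem[of k b c p] by (auto simp: z_def w_def)
      then have "card (Kz b c z) \<ge> 2" using jk
        by (metis card_2_iff card_mono finite)
      then obtain i1 i2 where "i1 \<in> {i. Lam i = z}" "i2 \<in> {i. Lam i = z}" "i1 \<noteq> i2"
        using two_elems[OF fin[of z]] cd[of z] by auto
      then have "cmod (Lam i1 - Lam i2) > 2 * \<delta>" using H[of i1 i2] outside zF by auto
      moreover have "Lam i1 = Lam i2" using \<open>i1 \<in> _\<close> \<open>i2 \<in> _\<close> by simp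
      ultimately show ?thesis using d by simp
    qed
  qed
next
  have fin: "finite {i. Lam i = z}" and cd: "card {i. Lam i = z} = card (Kz b c z)" for z
    using fp by (auto simp: FP_def)
  assume "sepQ b c"
  then obtain \<delta> and N :: nat where d: "\<delta> > 0"
    and H: "\<And>j k m p. (j, m) \<noteq> (k, p) \<Longrightarrow> \<bar>m\<bar> > int N \<Longrightarrow> \<bar>p\<bar> > int N \<Longrightarrow>
       cmod (zk (b j) (c j) m - zk (b k) (c k) p) > 2 * \<delta>"
    unfolding sepQ_def by blast
  define P where "P = (\<lambda>km. zk (b (fst km)) (c (fst km)) (snd km)) ` (UNIV \<times> {-int N..int N})"
  have finP: "finite P" unfolding P_def by simp
  define I0 where "I0 = (\<Union>z\<in>P. {i. Lam i = z})"
  have "finite I0" unfolding I0_def using finP fin by blast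
  then obtain M :: nat where M: "\<And>i. i \<in> I0 \<Longrightarrow> \<bar>i\<bar> \<le> int M"
    using finite_bound_int[of I0 "\<lambda>i. i"] by blast
  have notP: "Lam i \<notin> P" if "\<bar>i\<bar> > int M" for i
    using M[of i] that unfolding I0_def by auto
  have inP: "zk (b j) (c j) m \<in> P" if "\<bar>m\<bar> \<le> int N" for j m
    unfolding P_def using that by (intro image_eqI[of _ _ "(j, m)"]) auto
  have repr: "\<exists>j m. Lam i = zk (b j) (c j) m \<and> \<bar>m\<bar> > int N" if "\<bar>i\<bar> > int M" for i
  proof -
    have "i \<in> {i'. Lam i' = Lam i}" by simp
    then have "card {i'. Lam i' = Lam i} \<noteq> 0" using fin[of "Lam i"] by auto
    then have "Kz b c (Lam i) \<noteq> {}" using cd[of "Lam i"] by auto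
    then obtain j m where "Lam i = zk (b j) (c j) m" by (auto simp: Kz_def)
    moreover have "\<bar>m\<bar> > int N" using inP[of m j] notP[OF that] calculation by force
    ultimately show ?thesis by blast
  qed
  show "asymp_separated Lam" unfolding asymp_separated_def
  proof (intro exI[of _ "int M"] exI[of _ \<delta>] conjI d allI impI)
    fix i i' :: int assume a: "i \<noteq> i' \<and> int M < \<bar>i\<bar> \<and> int M < \<bar>i'\<bar>"
    obtain j m where jm: "Lam i = zk (b j) (c j) m" "\<bar>m\<bar> > int N" using repr a by blast
    obtain k p where kp: "Lam i' = zk (b k) (c k) p" "\<bar>p\<bar> > int N" using repr a by blast
    show "cmod (Lam i - Lam i') > 2 * \<delta>"
    proof (cases "(j, m) = (k, p)")
      case False
      then show ?thesis using H[OF False jm(2) kp(2)] jm kp by simp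
    next
      case True
      then have eq: "Lam i = Lam i'" using jm kp by simp
      have "{i, i'} \<subseteq> {x. Lam x = Lam i}" using eq by auto
      then have "card {x. Lam x = Lam i} \<ge> 2" using a
        by (metis card_2_iff card_mono fin)
      then have "card (Kz b c (Lam i)) \<ge> 2" using cd by simp
      then obtain j1 j2 where j12: "j1 \<in> Kz b c (Lam i)" "j2 \<in> Kz b c (Lam i)" "j1 \<noteq> j2"
        using two_elems[of "Kz b c (Lam i)"] by auto
      then obtain j' where j': "j' \<in> Kz b c (Lam i)" "j' \<noteq> j" by metis
      then obtain m' where m': "Lam i = zk (b j') (c j') m'" by (auto simp: Kz_def)
      have "\<bar>m'\<bar> > int N" using inP[of m' j'] notP a m' by force
      then have "cmod (zk (b j') (c j') m' - zk (b j) (c j) m) > 2 * \<delta>"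
        using H[of j' m' j m] j'(2) jm(2) by simp
      then have False using m' jm d by simp
      then show ?thesis ..
    qed
  qed
qed

lemma finite_combine:
  assumes "finite I" "\<forall>i\<in>I. \<exists>\<delta>>0. \<exists>N::nat. P i \<delta> N"
    and mono: "\<And>i \<delta> \<delta>' N N'. P i \<delta> N \<Longrightarrow> 0 < \<delta>' \<Longrightarrow> \<delta>' \<le> \<delta> \<Longrightarrow> N \<le> N' \<Longrightarrow> P i \<delta>' N'"
  shows "\<exists>\<delta>>(0::real). \<exists>N. \<forall>i\<in>I. P i \<delta> N"
  using assms(1,2)
proof (induction I rule: finite_induct)
  case empty
  then show ?case by (intro exI[of _ 1]) auto
next
  case (insert x F)
  then obtain \<delta>1 N1 where 1: "\<delta>1 > 0" "\<forall>i\<in>F. P i \<delta>1 N1" by auto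
  obtain \<delta>2 N2 where 2: "\<delta>2 > 0" "P x \<delta>2 N2" using insert by auto
  show ?case
    using 1 2 by (intro exI[of _ "min \<delta>1 \<delta>2"] conjI exI[of _ "max N1 N2"]) (auto intro: mono)
qed

lemma sepQ_iff:
  fixes b :: "'n::finite \<Rightarrow> real"
  assumes b_nz: "\<And>k. b k \<noteq> 0"
  shows "sepQ b c \<longleftrightarrow> (\<forall>j k. j \<noteq> k \<longrightarrow> Sep2 (b j) (c j) (b k) (c k))"
proof
  assume "sepQ b c"
  then show "\<forall>j k. j \<noteq> k \<longrightarrow> Sep2 (b j) (c j) (b k) (c k)"
    unfolding sepQ_def Sep2_def by (metis prod.inject)
next
  assume A: "\<forall>j k. j \<noteq> k \<longrightarrow> Sep2 (b j) (c j) (b k) (c k)"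
  define PP where "PP = (\<lambda>(jk :: 'n \<times> 'n) \<delta> (N::nat). \<forall>m p. (fst jk, m) \<noteq> (snd jk, p) \<and> \<bar>m\<bar> > int N \<and> \<bar>p\<bar> > int N \<longrightarrow>
      cmod (zk (b (fst jk)) (c (fst jk)) m - zk (b (snd jk)) (c (snd jk)) p) > 2 * \<delta>)"
  have each: "\<exists>\<delta>>0. \<exists>N::nat. PP jk \<delta> N" for jk
  proof (cases "fst jk = snd jk")
    case False
    then obtain \<delta> N where "\<delta> > 0" "\<forall>m p. \<bar>m\<bar> > int N \<and> \<bar>p\<bar> > int N \<longrightarrow>
      cmod (zk (b (fst jk)) (c (fst jk)) m - zk (b (snd jk)) (c (snd jk)) p) > 2 * \<delta>"
      using A unfolding Sep2_def by blast
    then show ?thesis unfolding PP_def by blast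
  next
    case True
    define k where "k = fst jk"
    define bb where "bb = b k"
    have bb: "bb \<noteq> 0" using b_nz by (simp add: bb_def)
    have "PP jk (pi / (2 * \<bar>bb\<bar>)) 0" unfolding PP_def
    proof (intro allI impI)
      fix m p :: int assume a: "(fst jk, m) \<noteq> (snd jk, p) \<and> int 0 < \<bar>m\<bar> \<and> int 0 < \<bar>p\<bar>"
      then have mp: "m \<noteq> p" using True by auto
      have "Re (zk bb (c k) m - zk bb (c k) p) = 2 * pi * of_int (m - p) / bb"
        using bb by (simp add: zk_def field_simps)
      then have "\<bar>Re (zk bb (c k) m - zk bb (c k) p)\<bar> = 2 * pi * \<bar>of_int (m - p)\<bar> / \<bar>bb\<bar>"
        by (simp add: abs_mult abs_divide)
      also have "\<dots> \<ge> 2 * pi * 1 / \<bar>bb\<bar>"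
        using mp bb by (intro divide_right_mono mult_left_mono) auto
      finally have X: "\<bar>Re (zk bb (c k) m - zk bb (c k) p)\<bar> \<ge> 2 * pi / \<bar>bb\<bar>" by simp
      have "cmod (zk bb (c k) m - zk bb (c k) p) \<ge> 2 * pi / \<bar>bb\<bar>"
        using abs_Re_le_cmod[of "zk bb (c k) m - zk bb (c k) p"] X by linarith
      moreover have "2 * pi / \<bar>bb\<bar> > 2 * (pi / (2 * \<bar>bb\<bar>))" using bb by (simp add: field_simps)
      ultimately show "cmod (zk (b (fst jk)) (c (fst jk)) m - zk (b (snd jk)) (c (snd jk)) p)
             > 2 * (pi / (2 * \<bar>bb\<bar>))"
        using True by (simp add: k_def bb_def)
    qed
    then show ?thesis using bb by (intro exI[of _ "pi / (2 * \<bar>bb\<bar>)"]) auto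
  qed
  have "\<exists>\<delta>>(0::real). \<exists>N. \<forall>jk\<in>UNIV. PP jk \<delta> N"
  proof (rule finite_combine)
    show "finite (UNIV :: ('n \<times> 'n) set)" by simp
    show "\<forall>i\<in>UNIV. \<exists>\<delta>>0. \<exists>N::nat. PP i \<delta> N" using each by blast
    fix i \<delta> \<delta>' and N N' :: nat
    assume "PP i \<delta> N" "0 < \<delta>'" "\<delta>' \<le> \<delta>" "N \<le> N'"
    then show "PP i \<delta>' N'" unfolding PP_def
      by (smt (verit, best) of_nat_mono)
  qed
  then show "sepQ b c" unfolding sepQ_def PP_def by auto
qed

lemma enum_gaps:
  fixes G :: "int set" and n :: nat
  assumes H: "\<And>m. \<exists>i\<in>G. m < i \<and> i \<le> m + int n"
  shows "\<exists>mk :: int \<Rightarrow> int. \<forall>k. mk k < mk (k + 1) \<and> mk (k + 1) \<le> mk k + int n \<and> mk k \<in> G"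
proof -
  define succ where "succ = (\<lambda>x. x + 1 + int (LEAST d::nat. x + 1 + int d \<in> G))"
  define pred where "pred = (\<lambda>x. x - 1 - int (LEAST d::nat. x - 1 - int d \<in> G))"
  have succ: "succ x \<in> G \<and> x < succ x \<and> succ x \<le> x + int n \<and> (\<forall>y\<in>G. x < y \<longrightarrow> succ x \<le> y)" for x
  proof -
    obtain i where i: "i \<in> G" "x < i" "i \<le> x + int n" using H by blast
    define d0 where "d0 = nat (i - x - 1)"
    have d0: "x + 1 + int d0 \<in> G" using i by (simp add: d0_def)
    have L1: "x + 1 + int (LEAST d::nat. x + 1 + int d \<in> G) \<in> G" using d0 by (rule LeastI)
    have L2: "(LEAST d::nat. x + 1 + int d \<in> G) \<le> d0" using d0 by (rule Least_le)
    have L3: "succ x \<le> y" if "y \<in> G" "x < y" for y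
    proof -
      have "(LEAST d::nat. x + 1 + int d \<in> G) \<le> nat (y - x - 1)"
        by (rule Least_le) (use that in simp)
      then show ?thesis using that by (simp add: succ_def)
    qed
    show ?thesis using L1 L2 L3 i by (simp add: succ_def d0_def)
  qed
  have pred: "pred x \<in> G \<and> pred x < x \<and> (\<forall>y\<in>G. y < x \<longrightarrow> y \<le> pred x)" for x
  proof -
    obtain i where i: "i \<in> G" "x - 1 - int n < i" "i \<le> x - 1 - int n + int n" using H by blast
    define d0 where "d0 = nat (x - 1 - i)"
    have d0: "x - 1 - int d0 \<in> G" using i by (simp add: d0_def)
    have L1: "x - 1 - int (LEAST d::nat. x - 1 - int d \<in> G) \<in> G" using d0 by (rule LeastI)
    have L3: "y \<le> pred x" if "y \<in> G" "y < x" for y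
    proof -
      have "(LEAST d::nat. x - 1 - int d \<in> G) \<le> nat (x - 1 - y)"
        by (rule Least_le) (use that in simp)
      then show ?thesis using that by (simp add: pred_def)
    qed
    show ?thesis using L1 L3 by (simp add: pred_def)
  qed
  have sp: "succ (pred x) = x" if "x \<in> G" for x
  proof -
    have "succ (pred x) \<le> x" using succ[of "pred x"] pred[of x] that by blast
    moreover have "succ (pred x) \<ge> x"
    proof (rule ccontr)
      assume "\<not> succ (pred x) \<ge> x"
      then have "succ (pred x) \<le> pred x" using pred[of x] succ[of "pred x"] by auto
      then show False using succ[of "pred x"] by simp
    qed
    ultimately show ?thesis by simp
  qed
  obtain g0 where g0: "g0 \<in> G" using H by blast
  define mk where "mk = (\<lambda>k::int. if k \<ge> 0 then (succ ^^ nat k) g0 else (pred ^^ nat (-k)) g0)"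
  have sG: "(succ ^^ j) g0 \<in> G" for j by (induction j) (use g0 succ in auto)
  have pG: "(pred ^^ j) g0 \<in> G" for j by (induction j) (use g0 pred in auto)
  have mkG: "mk k \<in> G" for k by (simp add: mk_def sG pG)
  have step: "mk (k + 1) = succ (mk k)" for k
  proof (cases "k \<ge> 0")
    case True
    then have "nat (k + 1) = Suc (nat k)" by simp
    then show ?thesis using True by (simp add: mk_def)
  next
    case False
    have "mk k = pred (mk (k + 1))"
    proof (cases "k + 1 = 0")
      case True
      then have "k = -1" by simp
      then show ?thesis by (simp add: mk_def)
    next
      case False
      with \<open>\<not> k \<ge> 0\<close> have "nat (-k) = Suc (nat (-(k+1)))" by simp
      then show ?thesis using False \<open>\<not> k \<ge> 0\<close> by (simp add: mk_def)
    qed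
    then show ?thesis using sp[OF mkG[of "k+1"]] by simp
  qed
  show ?thesis
    by (intro exI[of _ mk] allI) (simp add: step mkG succ)
qed

lemma mono_Re:
  fixes Lam :: "int \<Rightarrow> complex"
  assumes "\<And>m. Re (Lam m) \<le> Re (Lam (m + 1))" "i \<le> j"
  shows "Re (Lam i) \<le> Re (Lam j)"
proof -
  have "Re (Lam i) \<le> Re (Lam (i + int d))" for d
  proof (induction d)
    case (Suc d)
    then show ?case using assms(1)[of "i + int d"] by (simp add: algebra_simps)
  qed simp
  from this[of "nat (j - i)"] show ?thesis using assms(2) by simp
qed

lemma count_window:
  fixes b :: "'n::finite \<Rightarrow> real"
  assumes b_nz: "\<And>k. b k \<noteq> 0" and fp: "FP b c Lam" and finI: "finite I"
    and win: "\<And>i. i \<in> I \<Longrightarrow> x0 \<le> Re (Lam i) \<and> Re (Lam i) < x0 + W"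
    and W: "\<And>k. W \<le> 2 * pi / \<bar>b k\<bar>"
  shows "card I \<le> CARD('n)"
proof -
  have fin: "finite {i. Lam i = z}" and cd: "card {i. Lam i = z} = card (Kz b c z)" for z
    using fp by (auto simp: FP_def)
  have "card I = (\<Sum>i\<in>I. (1::nat))" by simp
  also have "\<dots> = (\<Sum>z\<in>Lam ` I. \<Sum>i\<in>{x. x \<in> I \<and> Lam x = z}. 1)"
    using finI by (rule sum.image_gen)
  also have "\<dots> = (\<Sum>z\<in>Lam ` I. card {x. x \<in> I \<and> Lam x = z})" by simp
  also have "\<dots> \<le> (\<Sum>z\<in>Lam ` I. card (Kz b c z))"
  proof (rule sum_mono)
    fix z assume "z \<in> Lam ` I"
    have "card {x. x \<in> I \<and> Lam x = z} \<le> card {i. Lam i = z}"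
      by (rule card_mono[OF fin]) auto
    then show "card {x. x \<in> I \<and> Lam x = z} \<le> card (Kz b c z)" using cd by simp
  qed
  also have "\<dots> = card (\<Union>z\<in>Lam ` I. Kz b c z)"
  proof (rule card_UN_disjoint[symmetric])
    show "finite (Lam ` I)" using finI by simp
    show "\<forall>i\<in>Lam ` I. finite (Kz b c i)" by simp
    show "\<forall>z\<in>Lam ` I. \<forall>w\<in>Lam ` I. z \<noteq> w \<longrightarrow> Kz b c z \<inter> Kz b c w = {}"
    proof (intro ballI impI)
      fix z w assume z: "z \<in> Lam ` I" and w: "w \<in> Lam ` I" and zw: "z \<noteq> w"
      show "Kz b c z \<inter> Kz b c w = {}"
      proof (rule ccontr)
        assume "Kz b c z \<inter> Kz b c w \<noteq> {}"
        then obtain k m1 m2 where k: "z = zk (b k) (c k) m1" "w = zk (b k) (c k) m2"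
          by (auto simp: Kz_def)
        have m12: "m1 \<noteq> m2" using k zw by auto
        have "Re z - Re w = 2 * pi * of_int (m1 - m2) / b k"
          using k b_nz[of k] by (simp add: zk_def field_simps)
        then have "\<bar>Re z - Re w\<bar> = 2 * pi * \<bar>of_int (m1 - m2)\<bar> / \<bar>b k\<bar>"
          by (simp add: abs_mult abs_divide)
        also have "\<dots> \<ge> 2 * pi * 1 / \<bar>b k\<bar>"
          using m12 b_nz[of k] by (intro divide_right_mono mult_left_mono) auto
        finally have "\<bar>Re z - Re w\<bar> \<ge> W" using W[of k] by simp
        moreover have "\<bar>Re z - Re w\<bar> < W"
        proof -
          obtain i where "i \<in> I" "z = Lam i" using z by blast
          moreover obtain i' where "i' \<in> I" "w = Lam i'" using w by blast
          ultimately show ?thesis using win[of i] win[of i'] by auto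
        qed
        ultimately show False by simp
      qed
    qed
  qed
  also have "\<dots> \<le> CARD('n)" by (rule card_mono) auto
  finally show ?thesis .
qed

lemma part_i:
  fixes b :: "'n::finite \<Rightarrow> real"
  assumes b_nz: "\<And>k. b k \<noteq> 0" and fp: "FP b c Lam"
    and mono: "\<forall>m. Re (Lam m) \<le> Re (Lam (m + 1))"
  shows "\<exists>mk :: int \<Rightarrow> int. \<forall>k. mk k < mk (k + 1) \<and> mk (k + 1) \<le> mk k + int CARD('n) \<and>
              Re (Lam (mk k)) - Re (Lam (mk k - 1)) \<ge> 2 * pi / ((MAX j. \<bar>b j\<bar>) * real CARD('n))"
proof -
  define n where "n = CARD('n)"
  define bmax where "bmax = (MAX j. \<bar>b j\<bar>)"
  have n0: "n > 0" by (simp add: n_def)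
  have bk: "\<bar>b k\<bar> \<le> bmax" for k unfolding bmax_def by (rule Max_ge) auto
  have bpos: "bmax > 0" using bk[of undefined] b_nz[of undefined] by linarith
  define W where "W = 2 * pi / bmax"
  define \<epsilon> where "\<epsilon> = 2 * pi / (bmax * real n)"
  have nW: "real n * \<epsilon> = W" using n0 bpos by (simp add: W_def \<epsilon>_def)
  have Wk: "W \<le> 2 * pi / \<bar>b k\<bar>" for k
    unfolding W_def using bk[of k] b_nz[of k] by (intro divide_left_mono) auto
  define G where "G = {i. Re (Lam i) - Re (Lam (i - 1)) \<ge> \<epsilon>}"
  have H: "\<exists>i\<in>G. m < i \<and> i \<le> m + int n" for m
  proof (rule ccontr)
    assume A: "\<not> ?thesis"
    define f where "f = (\<lambda>d::nat. Re (Lam (m + int d)))"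
    have lt: "f (Suc d) - f d < \<epsilon>" if "d < n" for d
    proof -
      have "m + int (Suc d) \<notin> G" using A that by auto
      then show ?thesis by (simp add: G_def f_def algebra_simps)
    qed
    have "f n - f 0 = (\<Sum>d<n. f (Suc d) - f d)" by (simp add: sum_lessThan_telescope)
    also have "\<dots> < (\<Sum>d<n. \<epsilon>)" using n0 lt by (intro sum_strict_mono) auto
    also have "\<dots> = W" using nW by simp
    finally have span: "Re (Lam (m + int n)) < Re (Lam m) + W" by (simp add: f_def)
    have "card {m..m + int n} \<le> CARD('n)"
    proof (rule count_window[OF b_nz fp])
      show "finite {m..m + int n}" by simp
      show "Re (Lam m) \<le> Re (Lam i) \<and> Re (Lam i) < Re (Lam m) + W" if "i \<in> {m..m + int n}" for i
        using mono_Re[of Lam m i] mono_Re[of Lam i "m + int n"] mono that span by auto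
      show "W \<le> 2 * pi / \<bar>b k\<bar>" for k by (rule Wk)
    qed
    then show False by (simp add: n_def)
  qed
  obtain mk :: "int \<Rightarrow> int" where mk: "\<forall>k. mk k < mk (k + 1) \<and> mk (k + 1) \<le> mk k + int n \<and> mk k \<in> G"
    using enum_gaps[OF H] by blast
  show ?thesis
    using mk by (intro exI[of _ mk]) (simp add: G_def \<epsilon>_def n_def bmax_def)
qed

lemma SR_iff:
  fixes b :: "'n::finite \<Rightarrow> real"
  assumes b_nz: "\<And>k. b k \<noteq> 0" and c_nz: "\<And>k. c k \<noteq> 0"
  shows "strictly_regular_bc b (diag_mat c) (- mat 1) \<longleftrightarrow>
    (\<forall>j k. j \<noteq> k \<longrightarrow>
             b j * ln (cmod (c k)) \<noteq> b k * ln (cmod (c j))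
             \<or> (b j / b k \<in> \<rat> \<and>
                (b j * Arg (c k) - b k * Arg (c j)) / (2 * pi * real_gcd (b j) (b k)) \<notin> \<int>))"
proof -
  have eq1: "strictly_regular_bc b (diag_mat c) (- mat 1) \<longleftrightarrow> sepQ b c"
  proof
    assume "strictly_regular_bc b (diag_mat c) (- mat 1)"
    then obtain Lam where z: "zero_seq (Delta0 b (diag_mat c) (- mat 1)) Lam" and a: "asymp_separated Lam"
      unfolding strictly_regular_bc_def by blast
    have fp: "FP b c Lam" using z zero_seq_iff[of b c Lam, OF b_nz c_nz] by simp
    show "sepQ b c" using a asep_iff[of b c Lam, OF b_nz fp] by simp
  next
    assume s: "sepQ b c"
    obtain Lam where fp: "FP b c Lam" using exists_FP[of b c, OF b_nz] by blast
    have z: "zero_seq (Delta0 b (diag_mat c) (- mat 1)) Lam" using fp zero_seq_iff[of b c Lam, OF b_nz c_nz] by simp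
    have a: "asymp_separated Lam" using s asep_iff[of b c Lam, OF b_nz fp] by simp
    have r: "regular_bc b (diag_mat c) (- mat 1)" using regular_diag[of c b, OF c_nz] .
    show "strictly_regular_bc b (diag_mat c) (- mat 1)"
      unfolding strictly_regular_bc_def using r z a by blast
  qed
  have eq2: "sepQ b c \<longleftrightarrow> (\<forall>j k. j \<noteq> k \<longrightarrow> Sep2 (b j) (c j) (b k) (c k))" by (rule sepQ_iff[of b c, OF b_nz])
  have eq3: "Sep2 (b j) (c j) (b k) (c k) \<longleftrightarrow> (b j * ln (cmod (c k)) \<noteq> b k * ln (cmod (c j))
             \<or> (b j / b k \<in> \<rat> \<and>
                (b j * Arg (c k) - b k * Arg (c j)) / (2 * pi * real_gcd (b j) (b k)) \<notin> \<int>))" for j k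
    by (rule Sep2_iff) (rule b_nz)+
  show ?thesis unfolding eq1 eq2 eq3 ..
qed

lemma half_int: "(of_int x / 2 :: real) \<in> \<int> \<longleftrightarrow> even x"
proof
  assume "(of_int x / 2 :: real) \<in> \<int>"
  then obtain y where "of_int x / 2 = (of_int y :: real)" by (meson Ints_cases)
  then have "x = 2 * y" by linarith
  then show "even x" by simp
next
  assume "even x"
  then obtain y where "x = 2 * y" by blast
  then show "(of_int x / 2 :: real) \<in> \<int>" by simp
qed

lemma int_odd_decomp:
  fixes N :: int
  assumes "N \<noteq> 0"
  shows "\<exists>a::nat. \<exists>M. odd M \<and> N = 2 ^ a * M"
  using assms
proof (induction "nat \<bar>N\<bar>" arbitrary: N rule: less_induct)
  case less
  show ?case
  proof (cases "even N")
    case False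
    then show ?thesis by (intro exI[of _ 0] exI[of _ N]) auto
  next
    case True
    then obtain N' where N': "N = 2 * N'" by blast
    then have "N' \<noteq> 0" "nat \<bar>N'\<bar> < nat \<bar>N\<bar>" using less.prems by auto
    then obtain a M where "odd M" "N' = 2 ^ a * M" using less.hyps by blast
    then show ?thesis using N' by (intro exI[of _ "Suc a"] exI[of _ M]) auto
  qed
qed

lemma odd_pow_eq:
  fixes P Q A B :: int
  assumes eq: "P * 2 ^ x * A = Q * 2 ^ y * B" and odd: "odd P" "odd Q" "odd A" "odd B"
  shows "x = y"
proof (rule ccontr)
  assume "x \<noteq> y"
  then consider "x < y" | "y < x" by linarith
  then show False
  proof cases
    case 1
    obtain d where "y = Suc (x + d)" using less_imp_Suc_add[OF 1] by blast
    then have d: "y = x + Suc d" by simp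
    have "P * A * 2 ^ x = (Q * 2 ^ Suc d * B) * 2 ^ x" using eq d by (simp add: power_add algebra_simps)
    then have e: "P * A = Q * 2 ^ Suc d * B" by simp
    have "even (P * A)" by (subst e) simp
    then show False using odd by simp
  next
    case 2
    obtain d where "x = Suc (y + d)" using less_imp_Suc_add[OF 2] by blast
    then have d: "x = y + Suc d" by simp
    have "Q * B * 2 ^ y = (P * 2 ^ Suc d * A) * 2 ^ y" using eq d by (simp add: power_add algebra_simps)
    then have e: "Q * B = P * 2 ^ Suc d * A" by simp
    have "even (Q * B)" by (subst e) simp
    then show False using odd by simp
  qed
qed

lemma pair_quot:
  fixes x y :: real
  assumes "x \<noteq> 0" "y \<noteq> 0" "x / y \<in> \<rat>"
  obtains P Q :: int where "x = P * real_gcd x y" "y = Q * real_gcd x y" "coprime P Q" "real_gcd x y > 0"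
    "(x * pi - y * pi) / (2 * pi * real_gcd x y) = of_int (P - Q) / 2"
proof -
  obtain P Q :: int where g: "real_gcd x y > 0" "x = P * real_gcd x y" "y = Q * real_gcd x y" "coprime P Q"
    using real_gcd_props[OF assms] by blast
  have "(x * pi - y * pi) / (2 * pi * real_gcd x y) = of_int (P - Q) / 2"
    using g(1) by (subst g(2), subst g(3)) (simp add: field_simps)
  then show ?thesis using g that by blast
qed

lemma cross_mult: "(x::real) = P * g \<Longrightarrow> y = Q * g \<Longrightarrow> P * y = Q * x"
  by simp

lemma anti_iff:
  fixes b :: "'n::finite \<Rightarrow> real"
  assumes b_nz: "\<And>k. b k \<noteq> 0"
  shows "(\<forall>j k. j \<noteq> k \<longrightarrow> b j / b k \<in> \<rat> \<and> (b j * pi - b k * pi) / (2 * pi * real_gcd (b j) (b k)) \<notin> \<int>)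
     \<longleftrightarrow> (\<exists>b0 > 0. \<exists>M :: 'n \<Rightarrow> int. \<exists>a :: 'n \<Rightarrow> nat.
                 (\<forall>k. odd (M k)) \<and> inj a \<and> (\<forall>k. b k = 2 ^ a k * of_int (M k) * b0))"
proof
  assume R: "\<exists>b0 > 0. \<exists>M :: 'n \<Rightarrow> int. \<exists>a :: 'n \<Rightarrow> nat.
                 (\<forall>k. odd (M k)) \<and> inj a \<and> (\<forall>k. b k = 2 ^ a k * of_int (M k) * b0)"
  then obtain b0 M a where b0: "b0 > 0" and M: "\<forall>k. odd (M k)" and a: "inj a"
    and bk: "\<forall>k. b k = 2 ^ a k * of_int (M k) * b0" by blast
  have M0: "M k \<noteq> 0" for k using M by (metis even_zero)
  show "\<forall>j k. j \<noteq> k \<longrightarrow> b j / b k \<in> \<rat> \<and> (b j * pi - b k * pi) / (2 * pi * real_gcd (b j) (b k)) \<notin> \<int>"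
  proof (intro allI impI)
    fix j k :: 'n assume jk: "j \<noteq> k"
    have ratio: "b j / b k = of_int (2 ^ a j * M j) / of_int (2 ^ a k * M k)"
      using bk b0 by simp
    then have rat: "b j / b k \<in> \<rat>" by simp
    obtain P Q :: int where PQ: "b j = P * real_gcd (b j) (b k)" "b k = Q * real_gcd (b j) (b k)"
      "coprime P Q" "real_gcd (b j) (b k) > 0"
      "(b j * pi - b k * pi) / (2 * pi * real_gcd (b j) (b k)) = of_int (P - Q) / 2"
      using pair_quot[OF b_nz[of j] b_nz[of k] rat] by blast
    have "of_int P * b k = of_int Q * b j" using cross_mult[OF PQ(1,2)] .
    then have "of_int P * (2 ^ a k * of_int (M k)) * b0 = of_int Q * (2 ^ a j * of_int (M j)) * b0"
      using bk by (simp add: algebra_simps)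
    then have "real_of_int (P * 2 ^ a k * M k) = real_of_int (Q * 2 ^ a j * M j)"
      using b0 by simp
    then have eq: "P * 2 ^ a k * M k = Q * 2 ^ a j * M j" by (simp only: of_int_eq_iff)
    have "odd (P - Q)"
    proof
      assume ev: "even (P - Q)"
      have "\<not> (even P \<and> even Q)"
        using PQ(3) coprime_common_divisor_int[of P Q 2] by auto
      then have "odd P" "odd Q" using ev by auto
      then have "a k = a j" using odd_pow_eq[OF eq] M by blast
      then show False using injD[OF a, of k j] jk by simp
    qed
    then have "(of_int (P - Q) / 2 :: real) \<notin> \<int>" using half_int by blast
    then show "b j / b k \<in> \<rat> \<and> (b j * pi - b k * pi) / (2 * pi * real_gcd (b j) (b k)) \<notin> \<int>"
      using rat unfolding PQ(5) by blast
  qed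
next
  assume L: "\<forall>j k. j \<noteq> k \<longrightarrow> b j / b k \<in> \<rat> \<and> (b j * pi - b k * pi) / (2 * pi * real_gcd (b j) (b k)) \<notin> \<int>"
  define k0 :: 'n where "k0 = undefined"
  have "\<forall>k. b k / b k0 \<in> \<rat>" using L b_nz by (metis Rats_1 divide_self)
  then have "\<forall>k. \<exists>u v :: int. b k / b k0 = of_int u / of_int v \<and> v > 0"
    by (meson Rats_cases')
  then obtain u v :: "'n \<Rightarrow> int" where uv: "\<And>k. b k / b k0 = of_int (u k) / of_int (v k)" "\<And>k. v k > 0"
    by metis
  define D where "D = (\<Prod>k\<in>UNIV. v k)"
  have D0: "D > 0" unfolding D_def using uv(2) by (simp add: prod_pos)
  have "v k dvd D" for k unfolding D_def by auto
  define e where "e = (\<lambda>k. D div v k)"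
  have e: "D = v k * e k" for k using \<open>v k dvd D\<close> by (simp add: e_def)
  have e0: "e k \<noteq> 0" for k using e[of k] D0 by auto
  define N where "N = (\<lambda>k. u k * e k)"
  define \<beta> where "\<beta> = b k0 / of_int D"
  have bN: "b k = of_int (N k) * \<beta>" for k
  proof -
    have "b k = of_int (u k) / of_int (v k) * b k0" using uv(1)[of k] b_nz[of k0] by (simp add: field_simps)
    also have "\<dots> = of_int (u k) * of_int (e k) / of_int D * b k0"
      using e[of k] uv(2)[of k] D0 e0[of k] by (simp add: field_simps)
    finally show ?thesis by (simp add: N_def \<beta>_def)
  qed
  have N0: "N k \<noteq> 0" for k using bN[of k] b_nz[of k] by auto
  have "\<forall>k. \<exists>a::nat. \<exists>M. odd M \<and> N k = 2 ^ a * M" using N0 int_odd_decomp by blast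
  then have "\<exists>aM :: 'n \<Rightarrow> nat \<times> int. \<forall>k. odd (snd (aM k)) \<and> N k = 2 ^ fst (aM k) * snd (aM k)"
    by (intro choice) auto
  then obtain aM :: "'n \<Rightarrow> nat \<times> int" where aM0: "\<forall>k. odd (snd (aM k)) \<and> N k = 2 ^ fst (aM k) * snd (aM k)"
    by blast
  define a where "a = (\<lambda>k. fst (aM k))"
  define M' where "M' = (\<lambda>k. snd (aM k))"
  have aM: "\<And>k. odd (M' k)" "\<And>k. N k = 2 ^ a k * M' k" using aM0 by (auto simp: a_def M'_def)
  have beta0: "\<beta> \<noteq> 0" using bN[of k0] b_nz[of k0] by auto
  define s :: int where "s = (if \<beta> > 0 then 1 else -1)"
  have sb: "of_int s * \<bar>\<beta>\<bar> = \<beta>" using beta0 by (auto simp: s_def)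
  define M where "M = (\<lambda>k. s * M' k)"
  have oddM: "\<forall>k. odd (M k)" using aM(1) by (simp add: M_def s_def)
  have bform: "\<forall>k. b k = 2 ^ a k * of_int (M k) * \<bar>\<beta>\<bar>"
  proof
    fix k
    have "b k = 2 ^ a k * of_int (M' k) * (of_int s * \<bar>\<beta>\<bar>)" using bN[of k] aM(2)[of k] sb by simp
    then show "b k = 2 ^ a k * of_int (M k) * \<bar>\<beta>\<bar>" by (simp add: M_def algebra_simps)
  qed
  have "inj a"
  proof (rule injI, rule ccontr)
    fix j k assume ajk: "a j = a k" and jk: "j \<noteq> k"
    have rat: "b j / b k \<in> \<rat>" using L jk by blast
    obtain P Q :: int where PQ: "b j = P * real_gcd (b j) (b k)" "b k = Q * real_gcd (b j) (b k)"
      "coprime P Q" "real_gcd (b j) (b k) > 0"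
      "(b j * pi - b k * pi) / (2 * pi * real_gcd (b j) (b k)) = of_int (P - Q) / 2"
      using pair_quot[OF b_nz[of j] b_nz[of k] rat] by blast
    have "(b j * pi - b k * pi) / (2 * pi * real_gcd (b j) (b k)) \<notin> \<int>" using L jk by blast
    then have "(of_int (P - Q) / 2 :: real) \<notin> \<int>" unfolding PQ(5) .
    then have oddPQ: "odd (P - Q)" using half_int by blast
    have "of_int P * b k = of_int Q * b j" using cross_mult[OF PQ(1,2)] .
    then have "of_int P * (2 ^ a k * of_int (M' k)) * \<beta> = of_int Q * (2 ^ a k * of_int (M' j)) * \<beta>"
      using bN aM(2) ajk by (simp add: algebra_simps)
    then have "real_of_int (P * M' k) = real_of_int (Q * M' j)"
      using beta0 by simp
    then have eq: "P * M' k = Q * M' j" by (simp only: of_int_eq_iff)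
    have "even P \<longleftrightarrow> even Q"
    proof -
      have "even P \<longleftrightarrow> even (P * M' k)" using aM(1)[of k] by simp
      also have "\<dots> \<longleftrightarrow> even (Q * M' j)" using eq by simp
      also have "\<dots> \<longleftrightarrow> even Q" using aM(1)[of j] by simp
      finally show ?thesis .
    qed
    then show False using oddPQ by auto
  qed
  then show "\<exists>b0 > 0. \<exists>M :: 'n \<Rightarrow> int. \<exists>a :: 'n \<Rightarrow> nat.
                 (\<forall>k. odd (M k)) \<and> inj a \<and> (\<forall>k. b k = 2 ^ a k * of_int (M k) * b0)"
    using oddM bform beta0 by (intro exI[of _ "\<bar>\<beta>\<bar>"]) auto
qed

theorem lemma5p18:
  fixes b :: "'n::finite \<Rightarrow> real" and c :: "'n \<Rightarrow> complex"
  assumes b_nz: "\<And>k. b k \<noteq> 0"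
    and c_nz: "\<And>k. c k \<noteq> 0"
  defines "C \<equiv> diag_mat c"
    and "D \<equiv> - (mat 1 :: complex^'n^'n)"
  shows
    "regular_bc b C D
     \<and> (\<forall>Lam. zero_seq (Delta0 b C D) Lam \<and> (\<forall>m. Re (Lam m) \<le> Re (Lam (m + 1))) \<longrightarrow>
          (\<exists>mk :: int \<Rightarrow> int. \<forall>k.
              mk k < mk (k + 1) \<and> mk (k + 1) \<le> mk k + int CARD('n) \<and>
              Re (Lam (mk k)) - Re (Lam (mk k - 1))
                \<ge> 2 * pi / ((MAX j. \<bar>b j\<bar>) * real CARD('n))))
     \<and> ((\<forall>j k. j \<noteq> k \<longrightarrow> b j * ln (cmod (c k)) \<noteq> b k * ln (cmod (c j)))
          \<longrightarrow> strictly_regular_bc b C D)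
     \<and> (strictly_regular_bc b C D \<longleftrightarrow>
          (\<forall>j k. j \<noteq> k \<longrightarrow>
             b j * ln (cmod (c k)) \<noteq> b k * ln (cmod (c j))
             \<or> (b j / b k \<in> \<rat> \<and>
                (b j * Arg (c k) - b k * Arg (c j)) / (2 * pi * real_gcd (b j) (b k)) \<notin> \<int>)))
     \<and> ((\<forall>k. c k = 1) \<and> CARD('n) \<ge> 2 \<longrightarrow> \<not> strictly_regular_bc b C D)
     \<and> ((\<forall>k. c k = -1) \<longrightarrow>
          (strictly_regular_bc b C D \<longleftrightarrow>
             (\<exists>b0 > 0. \<exists>M :: 'n \<Rightarrow> int. \<exists>a :: 'n \<Rightarrow> nat.
                 (\<forall>k. odd (M k)) \<and> inj a \<and> (\<forall>k. b k = 2 ^ a k * of_int (M k) * b0))))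
     \<and> ((\<forall>k. c k = -1) \<and> (\<exists>a. bij_betw a (UNIV :: 'n set) {1..CARD('n)} \<and> (\<forall>k. b k = 2 ^ a k))
          \<longrightarrow> strictly_regular_bc b C D)"
proof -
  have CD: "C = diag_mat c" "D = - mat 1" using assms(3,4) by simp_all
  have SR: "strictly_regular_bc b C D \<longleftrightarrow>
          (\<forall>j k. j \<noteq> k \<longrightarrow>
             b j * ln (cmod (c k)) \<noteq> b k * ln (cmod (c j))
             \<or> (b j / b k \<in> \<rat> \<and>
                (b j * Arg (c k) - b k * Arg (c j)) / (2 * pi * real_gcd (b j) (b k)) \<notin> \<int>))"
    unfolding CD by (rule SR_iff[of b c, OF b_nz c_nz])
  have P1: "regular_bc b C D" unfolding CD by (rule regular_diag[of c b, OF c_nz])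
  have P2: "\<forall>Lam. zero_seq (Delta0 b C D) Lam \<and> (\<forall>m. Re (Lam m) \<le> Re (Lam (m + 1))) \<longrightarrow>
          (\<exists>mk :: int \<Rightarrow> int. \<forall>k.
              mk k < mk (k + 1) \<and> mk (k + 1) \<le> mk k + int CARD('n) \<and>
              Re (Lam (mk k)) - Re (Lam (mk k - 1))
                \<ge> 2 * pi / ((MAX j. \<bar>b j\<bar>) * real CARD('n)))"
  proof (intro allI impI)
    fix Lam assume a: "zero_seq (Delta0 b C D) Lam \<and> (\<forall>m. Re (Lam m) \<le> Re (Lam (m + 1)))"
    then have fp: "FP b c Lam" using zero_seq_iff[of b c Lam, OF b_nz c_nz] unfolding CD by simp
    show "\<exists>mk :: int \<Rightarrow> int. \<forall>k.
              mk k < mk (k + 1) \<and> mk (k + 1) \<le> mk k + int CARD('n) \<and>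
              Re (Lam (mk k)) - Re (Lam (mk k - 1))
                \<ge> 2 * pi / ((MAX j. \<bar>b j\<bar>) * real CARD('n))"
      using part_i[of b c Lam, OF b_nz fp] a by blast
  qed
  have P3: "(\<forall>j k. j \<noteq> k \<longrightarrow> b j * ln (cmod (c k)) \<noteq> b k * ln (cmod (c j)))
          \<longrightarrow> strictly_regular_bc b C D"
    unfolding SR by blast
  have P5: "(\<forall>k. c k = 1) \<and> CARD('n) \<ge> 2 \<longrightarrow> \<not> strictly_regular_bc b C D"
  proof
    assume a: "(\<forall>k. c k = 1) \<and> CARD('n) \<ge> 2"
    then obtain j k :: 'n where jk: "j \<noteq> k" using two_elems[of "UNIV :: 'n set"] by auto
    have "\<not> (b j * ln (cmod (c k)) \<noteq> b k * ln (cmod (c j))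
             \<or> (b j / b k \<in> \<rat> \<and>
                (b j * Arg (c k) - b k * Arg (c j)) / (2 * pi * real_gcd (b j) (b k)) \<notin> \<int>))"
      using a by simp
    then show "\<not> strictly_regular_bc b C D" unfolding SR using jk by blast
  qed
  have Am1: "Arg (-1) = pi" using Arg_of_real[of "-1"] by simp
  have P6: "(\<forall>k. c k = -1) \<longrightarrow>
          (strictly_regular_bc b C D \<longleftrightarrow>
             (\<exists>b0 > 0. \<exists>M :: 'n \<Rightarrow> int. \<exists>a :: 'n \<Rightarrow> nat.
                 (\<forall>k. odd (M k)) \<and> inj a \<and> (\<forall>k. b k = 2 ^ a k * of_int (M k) * b0)))"
  proof
    assume a: "\<forall>k. c k = -1"
    have eqv: "(b j * ln (cmod (c k)) \<noteq> b k * ln (cmod (c j))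
             \<or> (b j / b k \<in> \<rat> \<and>
                (b j * Arg (c k) - b k * Arg (c j)) / (2 * pi * real_gcd (b j) (b k)) \<notin> \<int>))
          \<longleftrightarrow> (b j / b k \<in> \<rat> \<and> (b j * pi - b k * pi) / (2 * pi * real_gcd (b j) (b k)) \<notin> \<int>)" for j k
      using a Am1 by simp
    show "strictly_regular_bc b C D \<longleftrightarrow>
             (\<exists>b0 > 0. \<exists>M :: 'n \<Rightarrow> int. \<exists>a :: 'n \<Rightarrow> nat.
                 (\<forall>k. odd (M k)) \<and> inj a \<and> (\<forall>k. b k = 2 ^ a k * of_int (M k) * b0))"
      unfolding SR eqv by (rule anti_iff[of b, OF b_nz])
  qed
  have P7: "(\<forall>k. c k = -1) \<and> (\<exists>a. bij_betw a (UNIV :: 'n set) {1..CARD('n)} \<and> (\<forall>k. b k = 2 ^ a k))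
          \<longrightarrow> strictly_regular_bc b C D"
  proof
    assume a: "(\<forall>k. c k = -1) \<and> (\<exists>a. bij_betw a (UNIV :: 'n set) {1..CARD('n)} \<and> (\<forall>k. b k = 2 ^ a k))"
    then obtain e :: "'n \<Rightarrow> nat" where e: "bij_betw e (UNIV :: 'n set) {1..CARD('n)}" "\<forall>k. b k = 2 ^ e k"
      by blast
    have "\<exists>b0 > 0. \<exists>M :: 'n \<Rightarrow> int. \<exists>a :: 'n \<Rightarrow> nat.
                 (\<forall>k. odd (M k)) \<and> inj a \<and> (\<forall>k. b k = 2 ^ a k * of_int (M k) * b0)"
      using e bij_betw_imp_inj_on[OF e(1)]
      by (intro exI[of _ "1::real"] conjI exI[of _ "\<lambda>_. 1::int"] exI[of _ e]) simp_all
    then show "strictly_regular_bc b C D" using P6 a by blast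
  qed
  show ?thesis using P1 P2 P3 SR P5 P6 P7 by blast
qed

end
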